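(* For an integer $j\ge 2$ let $\bar\alpha_j$ be the largest $\alpha\ge 0$ such that $\left(1-e^{-\alpha j x}\right)^{j-1}\le x$ for all $x\in(0,1]$. Then $\bar\alpha_2=\tfrac12$, and for $j\ge 3$, $$\bar\alpha_j=\frac{1}{j}\,y_j^*\left(1-e^{-y_j^*}\right)^{1-j},$$ where $y_j^*$ is the unique positive solution of $e^{y}=(j-1)y+1$ (equivalently $y_j^*=-\frac{1}{j-1}\bigl(1+(j-1)W_{-1}\bigl(-\tfrac{1}{j-1}e^{-1/(j-1)}\bigr)\bigr)$ with $W_{-1}$ the non-principal real branch of the Lambert $W$ function). Numerically, $\bar\alpha_3\approx 0.8184$ and $\bar\alpha_4\approx 0.7722$. *)

theory Defs
  imports Complex_Main
begin

definition admissible :: "nat \<Rightarrow> real \<Rightarrow> bool" where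
  "admissible j a \<longleftrightarrow> a \<ge> 0 \<and>
     (\<forall>x::real. 0 < x \<and> x \<le> 1 \<longrightarrow> (1 - exp (- a * real j * x)) ^ (j - 1) \<le> x)"

definition alpha_bar :: "nat \<Rightarrow> real" where
  "alpha_bar j = (GREATEST a. admissible j a)"

end

theory Submission imports Defs begin

lemma exp_strict: fixes x :: real assumes "x \<noteq> 0" shows "1 + x < exp x"
proof (cases "0 \<le> 1 + x/2")
  case True
  have ee: "exp x = exp (x/2) ^ 2"
    by (simp add: power2_eq_square exp_add[symmetric])
  have "(1 + x/2)^2 \<le> exp (x/2) ^ 2"
    by (rule power_mono) (use True in auto)
  moreover have "(1 + x/2)^2 = 1 + x + x^2/4" by (simp add: power2_eq_square field_simps)
  moreover have "x^2 > 0" using assms by simp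
  ultimately show ?thesis using ee by linarith
next
  case False
  then have "1 + x < 0" by linarith
  then show ?thesis using exp_gt_zero[of x] by linarith
qed

lemma h_neg:
  fixes k y :: real assumes "k \<ge> 2" "0 < y" "y \<le> ln k"
  shows "exp y - k * y - 1 < 0"
proof -
  have "exp y \<le> k" using assms
    by (metis exp_le_cancel_iff exp_ln less_le_trans order_less_le_trans zero_less_numeral
        linorder_not_le order.strict_trans2)
  have "1 - y < exp (-y)" using exp_strict[of "-y"] assms by simp
  then have "exp y * (1 - y) < exp y * exp (-y)" by simp
  then have "exp y * (1 - y) < 1" by (simp add: exp_minus field_simps)
  then have "exp y - 1 < y * exp y" by (simp add: algebra_simps)
  also have "\<dots> \<le> y * k" using \<open>exp y \<le> k\<close> assms by (intro mult_left_mono) auto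
  finally show ?thesis by (simp add: algebra_simps)
qed

lemma h_mono:
  fixes k a b :: real assumes "k \<ge> 2" "ln k \<le> a" "a < b"
  shows "exp a - k * a - 1 < exp b - k * b - 1"
proof -
  have "k \<le> exp a" using assms
    by (metis exp_le_cancel_iff exp_ln linorder_not_le order.strict_trans2 zero_less_numeral less_le_trans)
  have "1 + (b - a) < exp (b - a)" using exp_strict[of "b-a"] assms by simp
  then have "exp a * (1 + (b - a)) < exp a * exp (b - a)" by simp
  then have "exp a + exp a * (b - a) < exp b" by (simp add: exp_diff field_simps)
  moreover have "k * (b - a) \<le> exp a * (b - a)" using \<open>k \<le> exp a\<close> assms
    by (intro mult_right_mono) auto
  ultimately show ?thesis by (simp add: algebra_simps)
qed

lemma h_root_exists:
  fixes k :: real assumes "k \<ge> 2"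
  shows "\<exists>s>0. exp s = k * s + 1"
proof -
  let ?h = "\<lambda>y. exp y - k * y - 1"
  have lk: "0 < ln k" using assms by simp
  have lk2: "ln k \<le> 4 * k" using ln_less_self[of k] assms by linarith
  have c: "continuous_on {ln k..4*k} ?h" by (intro continuous_intros)
  have n1: "?h (ln k) < 0" by (rule h_neg) (use assms lk in auto)
  have n2: "?h (4*k) > 0"
  proof -
    have "exp (4*k) = exp (2*k) ^ 2" by (simp add: power2_eq_square exp_add[symmetric])
    moreover have "(1 + 2*k)^2 \<le> exp (2*k) ^ 2"
      by (rule power_mono) (use assms exp_ge_add_one_self[of "2*k"] in auto)
    ultimately have "(1 + 2*k)^2 \<le> exp (4*k)" by simp
    moreover have "(1 + 2*k)^2 = 1 + 4*k + 4*k*k" by (simp add: power2_eq_square algebra_simps)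
    moreover have "k*(4*k) = 4*k*k" by simp
    ultimately show ?thesis using assms by linarith
  qed
  obtain s where s: "ln k \<le> s" "s \<le> 4*k" "?h s = 0"
    using IVT'[of ?h "ln k" 0 "4*k", OF less_imp_le[OF n1] less_imp_le[OF n2] lk2 c] by blast
  then show ?thesis using lk by (intro exI[of _ s]) auto
qed

lemma root_props:
  fixes k s :: real assumes k: "k \<ge> 2" and s: "s > 0" "exp s = k * s + 1"
  shows "ln k < s" "\<And>y. 0 < y \<Longrightarrow> y \<le> s \<Longrightarrow> exp y - k * y - 1 \<le> 0"
        "\<And>y. s \<le> y \<Longrightarrow> exp y - k * y - 1 \<ge> 0"
proof -
  show ls: "ln k < s"
  proof (rule ccontr)
    assume "\<not> ln k < s"
    then have "exp s - k * s - 1 < 0" using h_neg[of k s] k s by auto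
    then show False using s by simp
  qed
  fix y
  show "0 < y \<Longrightarrow> y \<le> s \<Longrightarrow> exp y - k * y - 1 \<le> 0"
  proof -
    assume y: "0 < y" "y \<le> s"
    show ?thesis
    proof (cases "y \<le> ln k")
      case True then show ?thesis using h_neg[of k y] k y by auto
    next
      case False
      show ?thesis
      proof (cases "y = s")
        case True then show ?thesis using s by simp
      next
        case False
        then have "y < s" using y by simp
        then show ?thesis using h_mono[of k y s] k s \<open>\<not> y \<le> ln k\<close> by auto
      qed
    qed
  qed
  show "s \<le> y \<Longrightarrow> exp y - k * y - 1 \<ge> 0"
  proof -
    assume y: "s \<le> y"
    show ?thesis
    proof (cases "y = s")
      case True then show ?thesis using s by simp
    next
      case False
      then have "s < y" using y by simp
      then show ?thesis using h_mono[of k s y] k s ls by auto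
    qed
  qed
qed

lemma root_unique:
  fixes k s t :: real assumes k: "k \<ge> 2" and s: "s > 0" "exp s = k * s + 1"
    and t: "t > 0" "exp t = k * t + 1"
  shows "s = t"
proof (rule ccontr)
  assume "s \<noteq> t"
  then consider "s < t" | "t < s" by linarith
  then show False
  proof cases
    case 1
    have "ln k < s" using root_props(1)[OF k s] .
    then show False using h_mono[of k s t] 1 k s t by auto
  next
    case 2
    have "ln k < t" using root_props(1)[OF k t] .
    then show False using h_mono[of k t s] 2 k s t by auto
  qed
qed

lemma psi_deriv:
  fixes x k :: real assumes "x > 0"
  shows "((\<lambda>y. k * ln (1 - exp (-y)) - ln y) has_real_derivative
           (k * x + 1 - exp x) / (x * (exp x - 1))) (at x)"
proof -
  have e1: "exp (-x) < 1" using assms by simp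
  have e2: "exp x > 1" using assms by simp
  have "((\<lambda>y. k * ln (1 - exp (-y)) - ln y) has_real_derivative
           k * (exp (-x) / (1 - exp (-x))) - 1 / x) (at x)"
    using assms e1 by (auto intro!: derivative_eq_intros simp: field_simps)
  moreover have "k * (exp (-x) / (1 - exp (-x))) - 1 / x = (k * x + 1 - exp x) / (x * (exp x - 1))"
    using assms e1 e2 by (simp add: exp_minus field_simps)
  ultimately show ?thesis by simp
qed

lemma q_bound:
  fixes s y :: real and n :: nat assumes n: "n \<ge> 2" and s: "s > 0" "exp s = real n * s + 1"
    and y: "y > 0"
  shows "(1 - exp (-y)) ^ n / y \<le> (1 - exp (-s)) ^ n / s"
proof -
  define k where "k = real n"
  have k: "k \<ge> 2" using n by (simp add: k_def)
  have sk: "exp s = k * s + 1" using s by (simp add: k_def)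
  define \<psi> where "\<psi> = (\<lambda>y. k * ln (1 - exp (-y)) - ln y)"
  have der: "\<And>x. x > 0 \<Longrightarrow> (\<psi> has_real_derivative (k * x + 1 - exp x) / (x * (exp x - 1))) (at x)"
    unfolding \<psi>_def by (rule psi_deriv)
  have cont: "\<And>a b. 0 < a \<Longrightarrow> continuous_on {a..b} \<psi>"
    unfolding \<psi>_def by (intro continuous_intros) auto
  have "\<psi> y \<le> \<psi> s"
  proof (cases "y \<le> s")
    case True
    show ?thesis
    proof (rule DERIV_nonneg_imp_increasing_open[OF True _ cont[OF y]])
      fix x assume x: "y < x" "x < s"
      have "exp x - k * x - 1 \<le> 0" using root_props(2)[OF k s(1) sk, of x] x y by auto
      moreover have "x * (exp x - 1) > 0" using x y by simp
      ultimately show "\<exists>d. (\<psi> has_real_derivative d) (at x) \<and> d \<ge> 0"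
        using der[of x] x y by (intro exI[of _ "(k * x + 1 - exp x) / (x * (exp x - 1))"]) auto
    qed
  next
    case False
    then have ys: "s \<le> y" by simp
    show ?thesis
    proof (rule DERIV_nonpos_imp_decreasing_open[OF ys _ cont[OF s(1)]])
      fix x assume x: "s < x" "x < y"
      have "exp x - k * x - 1 \<ge> 0" using root_props(3)[OF k s(1) sk, of x] x by auto
      moreover have "x * (exp x - 1) > 0" using x s by simp
      ultimately show "\<exists>d. (\<psi> has_real_derivative d) (at x) \<and> d \<le> 0"
        using der[of x] x s by (intro exI[of _ "(k * x + 1 - exp x) / (x * (exp x - 1))"])
          (auto intro!: divide_nonpos_pos)
    qed
  qed
  have pos: "\<And>z::real. z > 0 \<Longrightarrow> 0 < 1 - exp (-z)" by simp
  have "\<And>z. z > 0 \<Longrightarrow> \<psi> z = ln ((1 - exp (-z)) ^ n / z)"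
    unfolding \<psi>_def k_def using pos by (simp add: ln_div ln_realpow)
  then have "ln ((1 - exp (-y)) ^ n / y) \<le> ln ((1 - exp (-s)) ^ n / s)"
    using \<open>\<psi> y \<le> \<psi> s\<close> y s by simp
  then show ?thesis using pos[OF y] pos[OF s(1)] y s by simp
qed

lemma exp_neg_taylor:
  fixes x :: real assumes "x < 0" "0 < n"
  shows "\<bar>exp x - (\<Sum>m<n. x ^ m / fact m)\<bar> \<le> \<bar>x\<bar> ^ n / fact n"
    and "(\<Sum>m<n. x ^ m / fact m) - \<bar>x\<bar> ^ n / fact n \<le> exp x"
    and "exp x \<le> (\<Sum>m<n. x ^ m / fact m) + \<bar>x\<bar> ^ n / fact n"
proof -
  obtain t where t: "x < t" "t < 0"
    "exp x = (\<Sum>m<n. exp 0 / fact m * x ^ m) + exp t / fact n * x ^ n"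
    using Maclaurin_minus[of x n "\<lambda>n. exp" exp] assms by (auto intro: DERIV_exp)
  have e: "exp t \<le> 1" using t by simp
  have "\<bar>exp x - (\<Sum>m<n. x ^ m / fact m)\<bar> = exp t / fact n * \<bar>x\<bar> ^ n"
    using t(3) by (simp add: abs_mult power_abs)
  also have "\<dots> \<le> 1 / fact n * \<bar>x\<bar> ^ n"
    by (intro mult_right_mono divide_right_mono e) auto
  finally show *: "\<bar>exp x - (\<Sum>m<n. x ^ m / fact m)\<bar> \<le> \<bar>x\<bar> ^ n / fact n" by simp
  from * show "(\<Sum>m<n. x ^ m / fact m) - \<bar>x\<bar> ^ n / fact n \<le> exp x"
    and "exp x \<le> (\<Sum>m<n. x ^ m / fact m) + \<bar>x\<bar> ^ n / fact n" by (auto simp: abs_le_iff)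
qed

lemma exp_lt_from_neg: fixes u c :: real assumes "c > 0" "exp (-u) > 1 / c" shows "exp u < c"
proof -
  have e: "exp u * exp (-u) = 1" by (simp add: exp_add[symmetric])
  have "1 < c * exp (-u)" using assms by (simp add: field_simps)
  then have "exp u * 1 < exp u * (c * exp (-u))" by (rule mult_strict_left_mono) simp
  also have "\<dots> = c * (exp u * exp (-u))" by (simp add: algebra_simps)
  finally show ?thesis using e by simp
qed

lemma exp_gt_from_neg: fixes u c :: real assumes "c > 0" "exp (-u) < 1 / c" shows "exp u > c"
proof -
  have e: "exp u * exp (-u) = 1" by (simp add: exp_add[symmetric])
  have "c * exp (-u) < 1" using assms by (simp add: field_simps)
  then have "exp u * (c * exp (-u)) < exp u * 1" by (rule mult_strict_left_mono) simp
  also have "exp u * (c * exp (-u)) = c * (exp u * exp (-u))" by (simp add: algebra_simps)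
  finally show ?thesis using e by simp
qed

lemma num1: "exp (1.2564::real) < 2 * 1.2564 + 1"
proof (rule exp_lt_from_neg)
  have "(\<Sum>m<14. (-1.2564) ^ m / fact m) - \<bar>-1.2564::real\<bar> ^ 14 / fact 14 \<le> exp (-1.2564::real)"
    by (rule exp_neg_taylor(2)) auto
  then show "exp (- 1.2564) > 1 / (2 * 1.2564 + 1::real)"
    by (simp add: eval_nat_numeral fact_Suc)
qed simp

lemma num2: "exp (1.2565::real) > 2 * 1.2565 + 1"
proof (rule exp_gt_from_neg)
  have "exp (-1.2565::real) \<le> (\<Sum>m<14. (-1.2565) ^ m / fact m) + \<bar>-1.2565::real\<bar> ^ 14 / fact 14"
    by (rule exp_neg_taylor(3)) auto
  then show "exp (- 1.2565) < 1 / (2 * 1.2565 + 1::real)"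
    by (simp add: eval_nat_numeral fact_Suc)
qed simp

lemma num3: "exp (1.9038::real) < 3 * 1.9038 + 1"
proof (rule exp_lt_from_neg)
  have "(\<Sum>m<16. (-1.9038) ^ m / fact m) - \<bar>-1.9038::real\<bar> ^ 16 / fact 16 \<le> exp (-1.9038::real)"
    by (rule exp_neg_taylor(2)) auto
  then show "exp (- 1.9038) > 1 / (3 * 1.9038 + 1::real)"
    by (simp add: eval_nat_numeral fact_Suc)
qed simp

lemma num4: "exp (1.9039::real) > 3 * 1.9039 + 1"
proof (rule exp_gt_from_neg)
  have "exp (-1.9039::real) \<le> (\<Sum>m<16. (-1.9039) ^ m / fact m) + \<bar>-1.9039::real\<bar> ^ 16 / fact 16"
    by (rule exp_neg_taylor(3)) auto
  then show "exp (- 1.9039) < 1 / (3 * 1.9039 + 1::real)"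
    by (simp add: eval_nat_numeral fact_Suc)
qed simp

lemma poly3: fixes s :: real assumes "1.2564 < s" "s < 1.2565"
  shows "0.8184 \<le> (2*s+1)^2 / (12*s)" "(2*s+1)^2 / (12*s) < 0.8185"
proof -
  have h1: "(s - 1.2564) * (s - 1.2564) \<ge> 0" by simp
  have h2: "(s - 1.2564) * (1.2565 - s) \<ge> 0" using assms by simp
  have "0.8184 * (12*s) \<le> (2*s+1)^2" using h1 assms
    by (simp add: power2_eq_square algebra_simps)
  then show "0.8184 \<le> (2*s+1)^2 / (12*s)" using assms by (simp add: field_simps)
  have "(2*s+1)^2 < 0.8185 * (12*s)" using h2 assms
    by (simp add: power2_eq_square algebra_simps)
  then show "(2*s+1)^2 / (12*s) < 0.8185" using assms by (simp add: field_simps)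
qed

lemma poly4: fixes s :: real assumes "1.9038 < s" "s < 1.9039"
  shows "0.7722 \<le> (3*s+1)^3 / (108*s^2)" "(3*s+1)^3 / (108*s^2) < 0.7723"
proof -
  define t where "t = s - 1.9038"
  have t: "0 < t" "t < (1/10000)" using assms by (auto simp: t_def)
  have st: "s = 1.9038 + t" by (simp add: t_def)
  have t2: "t*t \<ge> 0" "t*t*t \<ge> 0" using t by auto
  have t3: "t*t \<le> (1/10000) * t" by (rule mult_right_mono) (use t in auto)
  have t4: "(t*t)*t \<le> (t*t) * (1/10000)" by (rule mult_left_mono) (use t in auto)
  have e1: "(3*s+1)^3 - 0.7722 * (108*s^2) = 150250361/5000000000 + 2196032697/25000000 * t + 489051/5000 * (t*t) + 27 * (t*t*t)"
    unfolding st by (simp add: power2_eq_square power3_eq_cube algebra_simps)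
  have e2: "(3*s+1)^3 - 0.7723 * (108*s^2) = -1136754469/125000000000 + 439000929/5000000 * t + 488997/5000 * (t*t) + 27 * (t*t*t)"
    unfolding st by (simp add: power2_eq_square power3_eq_cube algebra_simps)
  have "0.7722 * (108*s^2) \<le> (3*s+1)^3" using e1 t t2 by linarith
  then show "0.7722 \<le> (3*s+1)^3 / (108*s^2)" using assms by (simp add: field_simps)
  have "(3*s+1)^3 < 0.7723 * (108*s^2)" using e2 t t2 t3 t4 by linarith
  then show "(3*s+1)^3 / (108*s^2) < 0.7723" using assms by (simp add: field_simps)
qed

lemma alpha_bar_gen:
  fixes s :: real and n :: nat assumes n: "n \<ge> 2" and s: "s > 0" "exp s = real n * s + 1"
  shows "alpha_bar (n+1) = (1 / real (n+1)) * s / (1 - exp (- s)) ^ n"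
proof -
  define m where "m = s / (1 - exp (-s)) ^ n"
  have p: "0 < 1 - exp (-s)" using s by simp
  have p1: "1 - exp (-s) \<le> 1" by simp
  have pn: "0 < (1 - exp (-s)) ^ n" using p by simp
  have pn1: "(1 - exp (-s)) ^ n \<le> 1" using p p1 by (simp add: power_le_one)
  have m0: "m > 0" using s pn by (simp add: m_def)
  have ms: "s \<le> m" unfolding m_def using s pn pn1 by (simp add: field_simps)
  define c where "c = (1 / real (n+1)) * s / (1 - exp (- s)) ^ n"
  have cmd: "c = m / real (n+1)" by (simp add: c_def m_def)
  have cm: "c * real (n+1) = m" unfolding cmd by (simp del: of_nat_Suc)
  have "alpha_bar (n+1) = c"
    unfolding alpha_bar_def
  proof (rule Greatest_equality)
    show "admissible (n+1) c"
      unfolding admissible_def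
    proof (intro conjI allI impI)
      show "0 \<le> c" unfolding cmd using m0 by simp
      fix x :: real assume x: "0 < x \<and> x \<le> 1"
      define y where "y = m * x"
      have y0: "y > 0" using x m0 by (simp add: y_def)
      have ey: "- c * real (n + 1) * x = - y" using cm by (simp add: y_def)
      have "(1 - exp (-y)) ^ n / y \<le> (1 - exp (-s)) ^ n / s"
        by (rule q_bound[OF n s y0])
      also have "\<dots> = 1 / m" by (simp add: m_def)
      finally have "(1 - exp (-y)) ^ n \<le> y / m" using y0 m0 by (simp add: field_simps)
      also have "y / m = x" using m0 by (simp add: y_def)
      finally show "(1 - exp (- c * real (n + 1) * x)) ^ (n + 1 - 1) \<le> x" using ey by simp
    qed
  next
    fix a assume adm: "admissible (n+1) a"
    show "a \<le> c"
    proof (rule ccontr)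
      assume "\<not> a \<le> c"
      then have ac: "c < a" by simp
      have am: "m < a * real (n+1)" using ac cm
        by (metis mult_strict_right_mono of_nat_0_less_iff zero_less_Suc Suc_eq_plus1)
      have a0: "a > 0" using ac cm m0
        by (metis order.strict_trans zero_less_mult_pos2 of_nat_0_less_iff zero_less_Suc Suc_eq_plus1)
      define x where "x = s / (a * real (n+1))"
      have aj: "a * real (n+1) > 0" using a0 by simp
      have x0: "0 < x" using s aj by (simp add: x_def)
      have x1: "x \<le> 1" using ms am aj by (simp add: x_def field_simps)
      have "(1 - exp (- a * real (n + 1) * x)) ^ (n + 1 - 1) \<le> x"
        using adm x0 x1 unfolding admissible_def by blast
      moreover have "- a * real (n + 1) * x = - s" using aj by (simp add: x_def field_simps)
      ultimately have "(1 - exp (- s)) ^ n \<le> s / (a * real (n+1))" by (simp add: x_def)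
      then have "a * real (n+1) \<le> m" using aj pn by (simp add: m_def field_simps)
      then show False using am by simp
    qed
  qed
  then show ?thesis by (simp add: c_def)
qed

lemma alpha_bar_2: "alpha_bar 2 = 1/2"
  unfolding alpha_bar_def
proof (rule Greatest_equality)
  show "admissible 2 (1/2)"
    unfolding admissible_def using exp_ge_add_one_self by (auto simp: algebra_simps) (smt (verit) exp_ge_add_one_self)
next
  fix a assume adm: "admissible 2 a"
  show "a \<le> 1/2"
  proof (rule ccontr)
    assume "\<not> a \<le> 1/2"
    then have a: "a > 1/2" by simp
    define x where "x = (2*a - 1) / (4*a)"
    have x0: "0 < x" using a by (simp add: x_def)
    have x1: "x \<le> 1" using a by (simp add: x_def field_simps)
    define t where "t = (2*a - 1)/2"
    have t0: "t > 0" using a by (simp add: t_def)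
    have tx: "- a * real 2 * x = - t" using a by (simp add: x_def t_def field_simps)
    have "(1 - exp (- a * real 2 * x)) ^ (2 - 1) \<le> x"
      using adm x0 x1 unfolding admissible_def by blast
    then have le: "1 - exp (- t) \<le> x" using tx by simp
    have "1 + t \<le> exp t" by simp
    then have "exp (-t) * (1 + t) \<le> exp (-t) * exp t" by (intro mult_left_mono) auto
    then have "exp (-t) * (1 + t) \<le> 1" by (simp add: exp_add[symmetric])
    then have "exp (-t) \<le> 1 / (1 + t)" using t0 by (simp add: field_simps)
    then have "1 - x \<le> 1 / (1 + t)" using le by linarith
    then have "(1 - x) * (1 + t) \<le> 1" using t0 by (simp add: field_simps)
    moreover have "(1 - x) * (1 + t) = (2*a+1)*(2*a+1) / (8*a)" using a by (simp add: x_def t_def field_simps)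
    ultimately have "(2*a+1)*(2*a+1) \<le> 8*a" using a by (simp add: field_simps)
    moreover have "(2*a-1)*(2*a-1) > 0" using a by simp
    ultimately show False by (simp add: algebra_simps)
  qed
qed

theorem proposition1:
  shows "alpha_bar 2 = 1/2
    \<and> (\<forall>j::nat. j \<ge> 3 \<longrightarrow>
          (\<exists>!y::real. y > 0 \<and> exp y = real (j - 1) * y + 1)
        \<and> (\<forall>y::real. y > 0 \<and> exp y = real (j - 1) * y + 1 \<longrightarrow>
             alpha_bar j = (1 / real j) * y / (1 - exp (- y)) ^ (j - 1)))
    \<and> 0.8184 \<le> alpha_bar 3 \<and> alpha_bar 3 < 0.8185
    \<and> 0.7722 \<le> alpha_bar 4 \<and> alpha_bar 4 < 0.7723"
proof (intro conjI allI impI)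
  show "alpha_bar 2 = 1/2" by (rule alpha_bar_2)
next
  fix j :: nat assume j: "3 \<le> j"
  have k: "real (j - 1) \<ge> 2" using j by simp
  obtain s where s: "s > 0" "exp s = real (j - 1) * s + 1" using h_root_exists[OF k] by blast
  show "\<exists>!y::real. y > 0 \<and> exp y = real (j - 1) * y + 1"
    using s root_unique[OF k] by blast
next
  fix j :: nat and y :: real assume j: "3 \<le> j" and y: "y > 0 \<and> exp y = real (j - 1) * y + 1"
  have jj: "j = (j - 1) + 1" using j by simp
  have "alpha_bar ((j - 1) + 1) = (1 / real ((j - 1) + 1)) * y / (1 - exp (- y)) ^ (j - 1)"
    by (rule alpha_bar_gen) (use j y in auto)
  then show "alpha_bar j = (1 / real j) * y / (1 - exp (- y)) ^ (j - 1)" using jj by simp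
next
  have k: "(2::real) \<le> 2" by simp
  obtain s :: real where s: "s > 0" "exp s = 2 * s + 1" using h_root_exists[OF k] by blast
  have s1: "1.2564 < s"
  proof (rule ccontr)
    assume "\<not> 1.2564 < s"
    then have "exp 1.2564 - 2 * 1.2564 - 1 \<ge> (0::real)" by (intro root_props(3)[OF k s]) auto
    then show False using num1 by simp
  qed
  have s2: "s < 1.2565"
  proof (rule ccontr)
    assume "\<not> s < 1.2565"
    then have "exp 1.2565 - 2 * 1.2565 - 1 \<le> (0::real)" by (intro root_props(2)[OF k s]) auto
    then show False using num2 by simp
  qed
  have "alpha_bar (2+1) = (1 / real (2+1)) * s / (1 - exp (- s)) ^ 2"
    by (rule alpha_bar_gen) (use s in auto)
  also have "\<dots> = (2*s+1)^2 / (12*s)"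
  proof -
    have "exp (-s) = 1 / (2*s+1)" using s by (simp add: exp_minus inverse_eq_divide)
    then have e: "1 - exp (-s) = 2*s / (2*s+1)" using s by (simp add: field_simps)
    show ?thesis unfolding e using s by (simp add: field_simps power2_eq_square)
  qed
  finally have A: "alpha_bar 3 = (2*s+1)^2 / (12*s)" by simp
  show "0.8184 \<le> alpha_bar 3" using A poly3[OF s1 s2] by simp
  show "alpha_bar 3 < 0.8185" using A poly3[OF s1 s2] by simp
next
  have k: "(2::real) \<le> 3" by simp
  obtain s :: real where s: "s > 0" "exp s = 3 * s + 1" using h_root_exists[OF k] by blast
  have s1: "1.9038 < s"
  proof (rule ccontr)
    assume "\<not> 1.9038 < s"
    then have "exp 1.9038 - 3 * 1.9038 - 1 \<ge> (0::real)" by (intro root_props(3)[OF k s]) auto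
    then show False using num3 by simp
  qed
  have s2: "s < 1.9039"
  proof (rule ccontr)
    assume "\<not> s < 1.9039"
    then have "exp 1.9039 - 3 * 1.9039 - 1 \<le> (0::real)" by (intro root_props(2)[OF k s]) auto
    then show False using num4 by simp
  qed
  have "alpha_bar (3+1) = (1 / real (3+1)) * s / (1 - exp (- s)) ^ 3"
    by (rule alpha_bar_gen) (use s in auto)
  also have "\<dots> = (3*s+1)^3 / (108*s^2)"
  proof -
    have "exp (-s) = 1 / (3*s+1)" using s by (simp add: exp_minus inverse_eq_divide)
    then have e: "1 - exp (-s) = 3*s / (3*s+1)" using s by (simp add: field_simps)
    show ?thesis unfolding e using s by (simp add: field_simps power2_eq_square power3_eq_cube)
  qed
  finally have A: "alpha_bar 4 = (3*s+1)^3 / (108*s^2)" by simp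
  show "0.7722 \<le> alpha_bar 4" using A poly4[OF s1 s2] by simp
  show "alpha_bar 4 < 0.7723" using A poly4[OF s1 s2] by simp
qed

end
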